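(* Let $f:\mathbb{N}\to\mathbb{N}$ be a sub-linear order and let $f^*$ be its star-transform. Then: (1) $f^*$ is a sub-linear order; (2) if $f$ is computable then $f^*$ is computable; (3) if $f$ is upper semi-computable then $f^*$ is upper semi-computable; (4) for all $n,i\in\mathbb{N}$, $0\le f^*(n)-f^*(f^{(i)}(n))\le i$.
   Context: An order is a total, non-decreasing, unbounded function $\mathbb{N}\to\mathbb{N}$; it is sub-linear if $f(n)=o(n)$. $f^{(k)}$ denotes the $k$-fold iterate of $f$ ($f^{(0)}$ is the identity). For a sub-linear order $f$, let $p_f=\max\{n : f(n)\ge n\}$ (well defined by sub-linearity), and define the star-transform $f^*(n)=\min\{k : f^{(k)}(n)\le p_f\}$. A function $g:\mathbb{N}\to\mathbb{N}$ is upper semi-computable if the predicate "$g(n)\le k$" is computably enumerable uniformly in $n,k$. *)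

theory Defs
  imports Main "HOL-Library.Landau_Symbols"
begin

definition is_order :: "(nat \<Rightarrow> nat) \<Rightarrow> bool" where
  "is_order f \<longleftrightarrow> mono f \<and> (\<forall>m. \<exists>n. m \<le> f n)"

definition sublinear_order :: "(nat \<Rightarrow> nat) \<Rightarrow> bool" where
  "sublinear_order f \<longleftrightarrow> is_order f \<and> (\<lambda>n. real (f n)) \<in> o(\<lambda>n. real n)"

text \<open>p_f = max {n. f n >= n} (nonempty since f 0 >= 0, finite by sub-linearity).\<close>
definition pf :: "(nat \<Rightarrow> nat) \<Rightarrow> nat" where
  "pf f = Max {n. f n \<ge> n}"

definition star :: "(nat \<Rightarrow> nat) \<Rightarrow> nat \<Rightarrow> nat" where
  "star f n = (LEAST k. (f ^^ k) n \<le> pf f)"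

datatype recf =
    Zero
  | Succ
  | Proj nat
  | Comp recf "recf list"
  | Prim recf recf
  | Mini recf

inductive eval :: "recf \<Rightarrow> nat list \<Rightarrow> nat \<Rightarrow> bool" where
  eval_Zero: "eval Zero xs 0"
| eval_Succ: "eval Succ (x # xs) (Suc x)"
| eval_Proj: "i < length xs \<Longrightarrow> eval (Proj i) xs (xs ! i)"
| eval_Comp: "list_all2 (\<lambda>g y. eval g xs y) gs ys \<Longrightarrow> eval f ys z \<Longrightarrow> eval (Comp f gs) xs z"
| eval_Prim0: "eval f xs y \<Longrightarrow> eval (Prim f g) (0 # xs) y"
| eval_PrimS: "eval (Prim f g) (n # xs) y \<Longrightarrow> eval g (n # y # xs) z
                 \<Longrightarrow> eval (Prim f g) (Suc n # xs) z"
| eval_Mini: "eval f (n # xs) 0 \<Longrightarrow> (\<forall>m<n. \<exists>y. eval f (m # xs) (Suc y))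
                 \<Longrightarrow> eval (Mini f) xs n"

definition computable :: "(nat \<Rightarrow> nat) \<Rightarrow> bool" where
  "computable g \<longleftrightarrow> (\<exists>c. \<forall>n. eval c [n] (g n))"

text \<open>Upper semi-computable: the predicate g n \<le> k is c.e. uniformly in n, k,
  i.e. it is the domain of a binary partial recursive function.\<close>
definition upper_semicomputable :: "(nat \<Rightarrow> nat) \<Rightarrow> bool" where
  "upper_semicomputable g \<longleftrightarrow> (\<exists>c. \<forall>n k. g n \<le> k \<longleftrightarrow> (\<exists>y. eval c [n, k] y))"

end

theory Submission
  imports Defs
begin

fun itr :: "nat \<Rightarrow> (nat \<Rightarrow> nat \<Rightarrow> nat) \<Rightarrow> nat \<Rightarrow> nat" where
  "itr b F 0 = b" | "itr b F (Suc n) = F n (itr b F n)"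

lemma prim_eval:
  assumes "eval B ps b" "\<And>j s. eval S (j # s # ps) (F j s)"
  shows "eval (Prim B S) (n # ps) (itr b F n)"
  by (induction n) (auto intro: eval.intros assms)

lemma prim_eval': "eval B ps b \<Longrightarrow> (\<And>j s. eval S (j # s # ps) (F j s)) \<Longrightarrow> z = itr b F n
   \<Longrightarrow> eval (Prim B S) (n # ps) z"
  using prim_eval by blast

lemma evZ: "z = 0 \<Longrightarrow> eval Zero xs z" by (simp add: eval_Zero)
lemma evS: "z = Suc x \<Longrightarrow> eval Succ (x # xs) z" by (simp add: eval_Succ)
lemma evP: "i < length xs \<Longrightarrow> z = xs ! i \<Longrightarrow> eval (Proj i) xs z" by (simp add: eval_Proj)
lemma evC: "list_all2 (\<lambda>g y. eval g xs y) gs ys \<Longrightarrow> eval f ys z \<Longrightarrow> eval (Comp f gs) xs z"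
  by (rule eval_Comp)
lemma la2N: "list_all2 P [] []" by simp
lemma la2C: "P x y \<Longrightarrow> list_all2 P xs ys \<Longrightarrow> list_all2 P (x # xs) (y # ys)" by simp

fun constr :: "nat \<Rightarrow> recf" where
  "constr 0 = Zero" | "constr (Suc k) = Comp Succ [constr k]"

lemma ev_constr: "z = k \<Longrightarrow> eval (constr k) xs z"
proof (induction k arbitrary: z)
  case 0 then show ?case by (simp add: eval_Zero)
next
  case (Suc k) then show ?case by (auto intro!: evC[where ys="[k]"] evS)
qed
declare constr.simps[simp del]

definition "ADD = Prim (Proj 0) (Comp Succ [Proj 1])"
lemma ev_ADD: "z = x + y \<Longrightarrow> eval ADD [x, y] z"
proof -
  have "itr y (\<lambda>j s. Suc s) x = x + y" by (induction x) auto
  moreover assume "z = x + y"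
  ultimately show ?thesis unfolding ADD_def
    by (intro prim_eval'[where F="\<lambda>j s. Suc s"]) (auto intro!: evC[where ys="[_]"] evS evP)
qed

definition "MUL = Prim Zero (Comp ADD [Proj 1, Proj 2])"
lemma ev_MUL: "z = x * y \<Longrightarrow> eval MUL [x, y] z"
proof -
  have "itr 0 (\<lambda>j s. s + y) x = x * y" by (induction x) auto
  moreover assume "z = x * y"
  ultimately show ?thesis unfolding MUL_def
    by (intro prim_eval'[where F="\<lambda>j s. s + y"]) (auto intro!: evC[where ys="[_,_]"] ev_ADD evP evZ)
qed

definition "PRED = Prim Zero (Proj 0)"
lemma ev_PRED: "z = x - 1 \<Longrightarrow> eval PRED [x] z"
proof -
  have "itr 0 (\<lambda>j s. j) x = x - 1" by (cases x) auto
  moreover assume "z = x - 1"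
  ultimately show ?thesis unfolding PRED_def
    by (intro prim_eval'[where F="\<lambda>j s. j"]) (auto intro!: evP evZ)
qed

definition "SG = Prim Zero (constr 1)"
lemma ev_SG: "z = (if x = 0 then 0 else 1) \<Longrightarrow> eval SG [x] z"
proof -
  have "itr 0 (\<lambda>j s. 1) x = (if x = 0 then 0 else 1)" by (cases x) auto
  moreover assume "z = (if x = 0 then 0 else 1)"
  ultimately show ?thesis unfolding SG_def
    by (intro prim_eval'[where F="\<lambda>j s. 1"]) (auto intro!: ev_constr evZ)
qed

definition "NSG = Prim (constr 1) Zero"
lemma ev_NSG: "z = (if x = 0 then 1 else 0) \<Longrightarrow> eval NSG [x] z"
proof -
  have "itr 1 (\<lambda>j s. 0) x = (if x = 0 then 1 else 0)" by (cases x) auto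
  moreover assume "z = (if x = 0 then 1 else 0)"
  ultimately show ?thesis unfolding NSG_def
    by (intro prim_eval'[where F="\<lambda>j s. 0"]) (auto intro!: ev_constr evZ)
qed

definition "SUB = Prim (Proj 0) (Comp PRED [Proj 1])"
lemma ev_SUB: "z = y - x \<Longrightarrow> eval SUB [x, y] z"
proof -
  have "itr y (\<lambda>j s. s - 1) x = y - x" by (induction x) auto
  moreover assume "z = y - x"
  ultimately show ?thesis unfolding SUB_def
    by (intro prim_eval'[where F="\<lambda>j s. s - 1"]) (auto intro!: evC[where ys="[_]"] ev_PRED evP)
qed

definition "IFZ = Prim (Proj 0) (Proj 3)"
lemma ev_IFZ: "z = (if x = 0 then a else b) \<Longrightarrow> eval IFZ [x, a, b] z"
proof -
  have "itr a (\<lambda>j s. b) x = (if x = 0 then a else b)" by (cases x) auto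
  moreover assume "z = (if x = 0 then a else b)"
  ultimately show ?thesis unfolding IFZ_def
    by (intro prim_eval'[where F="\<lambda>j s. b"]) (auto intro!: evP)
qed

definition "LEQ = Comp NSG [Comp SUB [Proj 1, Proj 0]]"
lemma ev_LEQ: "z = (if x \<le> y then 1 else 0) \<Longrightarrow> eval LEQ [x, y] z"
  unfolding LEQ_def
  by (rule evC la2C la2N ev_NSG ev_SUB evP refl | simp)+

fun primF :: "nat option \<Rightarrow> (nat \<Rightarrow> nat \<Rightarrow> nat option) \<Rightarrow> nat \<Rightarrow> nat option" where
  "primF b s 0 = b"
| "primF b s (Suc n) = (case primF b s n of None \<Rightarrow> None | Some y \<Rightarrow> s n y)"

fun mst :: "(nat \<Rightarrow> nat option) \<Rightarrow> nat \<Rightarrow> nat" where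
  "mst h 0 = 0"
| "mst h (Suc j) = (if mst h j = 0 then (case h j of None \<Rightarrow> 1 | Some 0 \<Rightarrow> j + 2 | Some (Suc _) \<Rightarrow> 0) else mst h j)"

fun evalF :: "nat \<Rightarrow> recf \<Rightarrow> nat list \<Rightarrow> nat option" where
  "evalF t Zero xs = Some 0"
| "evalF t Succ xs = (case xs of [] \<Rightarrow> None | x # _ \<Rightarrow> Some (Suc x))"
| "evalF t (Proj i) xs = (if i < length xs then Some (xs ! i) else None)"
| "evalF t (Comp f gs) xs = (let rs = map (\<lambda>g. evalF t g xs) gs in
      if None \<in> set rs then None else evalF t f (map the rs))"
| "evalF t (Prim f g) xs = (case xs of [] \<Rightarrow> None
      | n # ys \<Rightarrow> primF (evalF t f ys) (\<lambda>m y. evalF t g (m # y # ys)) n)"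
| "evalF t (Mini f) xs = (let s = mst (\<lambda>m. evalF t f (m # xs)) t in
      if 2 \<le> s then Some (s - 2) else None)"

lemma mst_zero: "mst h j = 0 \<Longrightarrow> i < j \<Longrightarrow> \<exists>y. h i = Some (Suc y)"
proof (induction j)
  case 0 then show ?case by simp
next
  case (Suc j)
  show ?case
  proof (cases "mst h j = 0")
    case True
    with Suc.prems show ?thesis
      using Suc.IH by (auto split: option.splits nat.splits if_splits simp: less_Suc_eq)
  next
    case False with Suc.prems show ?thesis by simp
  qed
qed

lemma mst_ge2: "mst h j = n + 2 \<Longrightarrow> n < j \<and> h n = Some 0 \<and> (\<forall>i<n. \<exists>y. h i = Some (Suc y))"
proof (induction j)
  case 0 then show ?case by simp
next
  case (Suc j)
  show ?case
  proof (cases "mst h j = 0")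
    case True
    then have "n = j \<and> h j = Some 0" using Suc.prems by (auto split: option.splits nat.splits)
    then show ?thesis using mst_zero[OF True] by auto
  next
    case False with Suc show ?thesis by auto
  qed
qed

lemma mst_pre: "h n = Some 0 \<Longrightarrow> \<forall>i<n. \<exists>y. h i = Some (Suc y) \<Longrightarrow> j \<le> n \<Longrightarrow> mst h j = 0"
proof (induction j)
  case (Suc j)
  then obtain y where "h j = Some (Suc y)" by (meson Suc_le_lessD)
  then show ?case using Suc by simp
qed simp

lemma mst_found: "h n = Some 0 \<Longrightarrow> \<forall>i<n. \<exists>y. h i = Some (Suc y) \<Longrightarrow> n < j \<Longrightarrow> mst h j = n + 2"
proof (induction j)
  case 0 then show ?case by simp
next
  case (Suc j)
  show ?case
  proof (cases "j = n")
    case True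
    then show ?thesis using mst_pre[OF Suc.prems(1,2), of n] Suc.prems by simp
  next
    case False
    then have "n < j" using Suc.prems by simp
    then show ?thesis using Suc by simp
  qed
qed

lemma evalF_sound: "evalF t c xs = Some y \<Longrightarrow> eval c xs y"
proof (induction t c xs arbitrary: y rule: evalF.induct)
  case (1 t xs) then show ?case by (auto intro: eval.intros)
next
  case (2 t xs) then show ?case by (auto intro: eval.intros split: list.splits)
next
  case (3 t i xs) then show ?case by (auto intro: eval.intros split: if_splits)
next
  case (4 t f gs xs)
  let ?rs = "map (\<lambda>g. evalF t g xs) gs"
  have nn: "None \<notin> set ?rs" using 4(3) by (auto simp: Let_def split: if_splits)
  then have ev: "evalF t f (map the ?rs) = Some y" using 4(3) by (simp add: Let_def)
  have "list_all2 (\<lambda>g y. eval g xs y) gs (map the ?rs)"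
    unfolding list_all2_conv_all_nth
  proof (intro conjI allI impI)
    fix i assume i: "i < length gs"
    then have "evalF t (gs ! i) xs = Some (the (evalF t (gs ! i) xs))"
      using nn by (metis length_map nth_map nth_mem option.collapse)
    then show "eval (gs ! i) xs (map the ?rs ! i)"
      using 4(1)[of "gs ! i"] i by auto
  qed simp
  then show ?case using 4(2)[OF refl nn ev] by (rule eval_Comp)
next
  case (5 t f g xs)
  then obtain n ys where xs: "xs = n # ys" by (auto split: list.splits)
  have "primF (evalF t f ys) (\<lambda>m y. evalF t g (m # y # ys)) n = Some y \<Longrightarrow> eval (Prim f g) (n # ys) y" for y
  proof (induction n arbitrary: y)
    case 0 then show ?case using 5(1)[of n ys] xs by (auto intro: eval.intros)
  next
    case (Suc k)
    then obtain z where z: "primF (evalF t f ys) (\<lambda>m y. evalF t g (m # y # ys)) k = Some z"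
      and gz: "evalF t g (k # z # ys) = Some y" by (auto split: option.splits)
    show ?case using Suc.IH[OF z] 5(2)[of n ys k z y] xs gz by (auto intro: eval.intros)
  qed
  then show ?case using 5(3) xs by simp
next
  case (6 t f xs)
  let ?h = "\<lambda>m. evalF t f (m # xs)"
  have s: "mst ?h t = y + 2" using 6(2) by (auto simp: Let_def split: if_splits)
  from mst_ge2[OF s] have "?h y = Some 0" "\<forall>i<y. \<exists>z. ?h i = Some (Suc z)" by auto
  then show ?case using 6(1) by (metis eval_Mini)
qed

lemma la2_eventually:
  assumes "list_all2 (\<lambda>g y. \<exists>T::nat. \<forall>t\<ge>T. Q t g y) gs ys"
  shows "\<exists>T. \<forall>t\<ge>T. list_all2 (Q t) gs ys"
  using assms
proof (induction gs arbitrary: ys)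
  case Nil then show ?case by auto
next
  case (Cons g gs ys0)
  then obtain y ys where ys0: "ys0 = y # ys" and a: "\<exists>T. \<forall>t\<ge>T. Q t g y"
    and b: "list_all2 (\<lambda>g y. \<exists>T. \<forall>t\<ge>T. Q t g y) gs ys" by (auto simp: list_all2_Cons1)
  obtain T1 where T1: "\<forall>t\<ge>T1. Q t g y" using a by blast
  obtain T2 where T2: "\<forall>t\<ge>T2. list_all2 (Q t) gs ys" using Cons.IH[OF b] by blast
  show ?case
  proof (intro exI[of _ "max T1 T2"] allI impI)
    fix t assume "max T1 T2 \<le> t"
    then have "T1 \<le> t" "T2 \<le> t" by auto
    then show "list_all2 (Q t) (g # gs) ys0" using T1 T2 ys0 by simp
  qed
qed

lemma la2_map_Some: assumes "list_all2 (\<lambda>g y. F g = Some y) gs ys" shows "map F gs = map Some ys"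
  using assms by (induction gs arbitrary: ys) (auto simp: list_all2_Cons1)

lemma bounded_choice:
  fixes n :: nat
  shows "(\<forall>m<n. \<exists>T::nat. \<forall>t\<ge>T. P m t) \<Longrightarrow> \<exists>T. \<forall>m<n. \<forall>t\<ge>T. P m t"
proof (induction n)
  case 0 then show ?case by auto
next
  case (Suc n)
  then obtain T1 where T1: "\<forall>m<n. \<forall>t\<ge>T1. P m t" by auto
  obtain T2 where "\<forall>t\<ge>T2. P n t" using Suc.prems by auto
  then show ?case using T1 by (intro exI[of _ "max T1 T2"]) (auto simp: less_Suc_eq)
qed

lemma evalF_complete: "eval c xs y \<Longrightarrow> \<exists>T. \<forall>t\<ge>T. evalF t c xs = Some y"
proof (induction rule: eval.induct)
  case (eval_Comp xs gs ys f z)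
  note facts = eval_Comp
  have "list_all2 (\<lambda>g y. \<exists>T. \<forall>t\<ge>T. evalF t g xs = Some y) gs ys"
    using eval_Comp(1) by (rule list_all2_mono) blast
  then obtain T1 where T1: "\<forall>t\<ge>T1. list_all2 (\<lambda>g y. evalF t g xs = Some y) gs ys"
    using la2_eventually[where Q="\<lambda>t g y. evalF t g xs = Some y"] by blast
  obtain T2 where T2: "\<forall>t\<ge>T2. evalF t f ys = Some z" using eval_Comp.IH by blast
  show ?case
  proof (intro exI[of _ "max T1 T2"] allI impI)
    fix t assume "max T1 T2 \<le> t"
    then have "map (\<lambda>g. evalF t g xs) gs = map Some ys" "evalF t f ys = Some z"
      using T1 T2 la2_map_Some[of "\<lambda>g. evalF t g xs" gs ys] by auto
    then show "evalF t (Comp f gs) xs = Some z" by (simp add: Let_def comp_def)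
  qed
next
  case (eval_PrimS f g n xs y z)
  then obtain T1 T2 where T: "\<forall>t\<ge>T1. evalF t (Prim f g) (n # xs) = Some y"
     "\<forall>t\<ge>T2. evalF t g (n # y # xs) = Some z" by blast
  then show ?case
  proof (intro exI[of _ "max T1 T2"] allI impI)
    fix t assume "max T1 T2 \<le> t"
    then have "T1 \<le> t" "T2 \<le> t" by auto
    then show "evalF t (Prim f g) (Suc n # xs) = Some z" using T by simp
  qed
next
  case (eval_Mini f n xs)
  obtain T0 where T0: "\<forall>t\<ge>T0. evalF t f (n # xs) = Some 0" using eval_Mini(2) by blast
  have "\<forall>m<n. \<exists>T. \<forall>t\<ge>T. \<exists>y. evalF t f (m # xs) = Some (Suc y)"
    using eval_Mini(3) by blast
  then have "\<exists>T. \<forall>m<n. \<forall>t\<ge>T. \<exists>y. evalF t f (m # xs) = Some (Suc y)"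
    by (rule bounded_choice)
  then obtain T1 where T1: "\<forall>m<n. \<forall>t\<ge>T1. \<exists>y. evalF t f (m # xs) = Some (Suc y)"
    by (rule exE)
  show ?case
  proof (intro exI[of _ "max (max T0 T1) (Suc n)"] allI impI)
    fix t assume t: "max (max T0 T1) (Suc n) \<le> t"
    have "T0 \<le> t" "T1 \<le> t" "n < t" using t by auto
    have "mst (\<lambda>m. evalF t f (m # xs)) t = n + 2"
      by (rule mst_found) (use t T0 T1 \<open>T0 \<le> t\<close> \<open>T1 \<le> t\<close> \<open>n < t\<close> in simp_all)
    then show "evalF t (Mini f) xs = Some n" by (simp add: Let_def)
  qed
qed auto

lemma eval_det: "eval c xs y \<Longrightarrow> eval c xs z \<Longrightarrow> y = z"
proof -
  assume "eval c xs y" "eval c xs z"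
  then obtain T1 T2 where "\<forall>t\<ge>T1. evalF t c xs = Some y" "\<forall>t\<ge>T2. evalF t c xs = Some z"
    using evalF_complete by blast
  then have "Some y = Some z" by (metis max.cobounded1 max.cobounded2)
  then show ?thesis by simp
qed


lemma evC1: "eval g1 L y1 \<Longrightarrow> eval f [y1] z \<Longrightarrow> eval (Comp f [g1]) L z"
  by (rule evC[where ys="[y1]"]) auto
lemma evC2: "eval g1 L y1 \<Longrightarrow> eval g2 L y2 \<Longrightarrow> eval f [y1, y2] z \<Longrightarrow> eval (Comp f [g1, g2]) L z"
  by (rule evC[where ys="[y1, y2]"]) auto
lemma evC3: "eval g1 L y1 \<Longrightarrow> eval g2 L y2 \<Longrightarrow> eval g3 L y3 \<Longrightarrow> eval f [y1, y2, y3] z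
  \<Longrightarrow> eval (Comp f [g1, g2, g3]) L z"
  by (rule evC[where ys="[y1, y2, y3]"]) auto
lemma evP0: "eval (Proj 0) (x # L) x" using eval_Proj[of 0 "x # L"] by simp
lemma evP1: "eval (Proj 1) (y # x # L) x" using eval_Proj[of 1 "y # x # L"] by simp
lemma evP2: "eval (Proj 2) (z # y # x # L) x" using eval_Proj[of 2 "z # y # x # L"] by simp

fun enc :: "nat option \<Rightarrow> nat" where "enc None = 0" | "enc (Some y) = Suc y"

definition projs :: "nat \<Rightarrow> nat \<Rightarrow> recf list" where
  "projs k a = map (\<lambda>i. Proj (i + k)) [0..<a]"

lemma la2_projs: "length L = k + a \<Longrightarrow> list_all2 (\<lambda>g y. eval g L y) (projs k a) (drop k L)"
  unfolding projs_def list_all2_conv_all_nth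
  by (auto intro!: evP simp: add.commute)

lemma la2_map: "(\<And>g. g \<in> set gs \<Longrightarrow> eval (F g) L (G g)) \<Longrightarrow> list_all2 (\<lambda>g y. eval g L y) (map F gs) (map G gs)"
  unfolding list_all2_conv_all_nth by auto

fun allpos :: "recf list \<Rightarrow> recf" where
  "allpos [] = constr 1" | "allpos (r # rs) = Comp MUL [Comp SG [r], allpos rs]"

lemma ev_allpos: "list_all2 (\<lambda>r v. eval r L v) rs vs \<Longrightarrow> eval (allpos rs) L (if 0 \<in> set vs then 0 else 1)"
proof (induction rs arbitrary: vs)
  case Nil then show ?case by (auto intro: ev_constr)
next
  case (Cons r rs vs0)
  then obtain v vs where vs0: "vs0 = v # vs" and r: "eval r L v" and rs: "list_all2 (\<lambda>r v. eval r L v) rs vs"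
    by (auto simp: list_all2_Cons1)
  note IH = Cons.IH[OF rs]
  show ?case unfolding vs0 allpos.simps
    by (rule evC la2C la2N ev_MUL ev_SG r IH refl | simp)+
qed

fun comp :: "nat \<Rightarrow> recf \<Rightarrow> recf" where
  "comp ar Zero = constr 1"
| "comp ar Succ = (if ar = 0 then Zero else Comp Succ [Comp Succ [Proj 1]])"
| "comp ar (Proj i) = (if i < ar then Comp Succ [Proj (Suc i)] else Zero)"
| "comp ar (Comp f gs) = Comp MUL [allpos (map (comp ar) gs),
      Comp (comp (length gs) f) (Proj 0 # map (\<lambda>g. Comp PRED [comp ar g]) gs)]"
| "comp ar (Prim f g) = (case ar of 0 \<Rightarrow> Zero | Suc a \<Rightarrow>
      Comp (Prim (comp a f) (Comp MUL [Comp SG [Proj 1],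
          Comp (comp (Suc (Suc a)) g) (Proj 2 # Proj 0 # Comp PRED [Proj 1] # projs 3 a)]))
        (Proj 1 # Proj 0 # projs 2 a))"
| "comp ar (Mini f) = Comp (Comp IFZ [Proj 0, Zero, Comp IFZ [Comp PRED [Proj 0], Zero, Comp PRED [Proj 0]]])
     [Comp (Prim Zero (Comp IFZ [Proj 1,
         Comp IFZ [Comp (comp (Suc ar) f) (Proj 2 # Proj 0 # projs 3 ar), constr 1,
           Comp IFZ [Comp PRED [Comp (comp (Suc ar) f) (Proj 2 # Proj 0 # projs 3 ar)],
                     Comp Succ [Comp Succ [Proj 0]], Zero]],
         Proj 1]))
       (Proj 0 # Proj 0 # projs 1 ar)]"

lemma enc_minus: "x \<noteq> None \<Longrightarrow> enc x - 1 = the x" by (cases x) auto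
lemma enc_minus2: "None \<noteq> x \<Longrightarrow> enc x - Suc 0 = the x" by (cases x) auto
lemma enc_0: "(enc x = 0) = (x = None)" by (cases x) auto

lemma aux1: "None \<notin> set (map h gs) \<Longrightarrow> map (\<lambda>g. enc (h g) - 1) gs = map the (map h gs)"
  by (induction gs) (simp_all add: enc_minus enc_minus2)
lemma aux0: "(0 \<in> set (map (\<lambda>g. enc (h g)) gs)) = (None \<in> set (map h gs))"
  by (induction gs) (auto simp: enc_0)

lemma comp_correct: "length xs = ar \<Longrightarrow> eval (comp ar c) (t # xs) (enc (evalF t c xs))"
proof (induction c arbitrary: ar xs)
  case Zero then show ?case by (auto intro: ev_constr)
next
  case Succ then show ?case
    by (cases xs) (auto intro!: evZ evC[where ys="[_]"] evS evP)
next
  case (Proj i) then show ?case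
    by (auto intro!: evZ evC[where ys="[_]"] evS evP)
next
  case (Comp f gs)
  let ?rs = "map (\<lambda>g. evalF t g xs) gs"
  let ?vs = "map (\<lambda>g. enc (evalF t g xs)) gs"
  have g: "eval (comp ar g) (t # xs) (enc (evalF t g xs))" if "g \<in> set gs" for g
    using Comp.IH(2)[OF that Comp.prems] .
  have A: "eval (allpos (map (comp ar) gs)) (t # xs) (if 0 \<in> set ?vs then 0 else 1)"
    by (rule ev_allpos, rule la2_map, rule g)
  let ?ys = "map (\<lambda>g. enc (evalF t g xs) - 1) gs"
  have B: "eval (Comp (comp (length gs) f) (Proj 0 # map (\<lambda>g. Comp PRED [comp ar g]) gs)) (t # xs)
        (enc (evalF t f ?ys))"
  proof (rule evC[where ys="t # ?ys"])
    show "eval (comp (length gs) f) (t # ?ys) (enc (evalF t f ?ys))"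
      by (rule Comp.IH(1)) simp
    have "list_all2 (\<lambda>g y. eval g (t # xs) y) (map (\<lambda>g. Comp PRED [comp ar g]) gs) ?ys"
      by (rule la2_map) (rule evC[where ys="[_]"], auto intro!: g ev_PRED)
    then show "list_all2 (\<lambda>g y. eval g (t # xs) y) (Proj 0 # map (\<lambda>g. Comp PRED [comp ar g]) gs) (t # ?ys)"
      by (auto intro: evP)
  qed
  have val: "(if 0 \<in> set ?vs then 0 else 1) * enc (evalF t f ?ys) = enc (evalF t (Comp f gs) xs)"
  proof (cases "None \<in> set ?rs")
    case True
    then have "0 \<in> set ?vs" using aux0[of "\<lambda>g. evalF t g xs" gs] by simp
    then show ?thesis using True by (simp add: Let_def)
  next
    case False
    then have "0 \<notin> set ?vs" using aux0[of "\<lambda>g. evalF t g xs" gs] by simp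
    have ys: "?ys = map the ?rs" using aux1[of "\<lambda>g. evalF t g xs" gs] False by simp
    have F: "(None \<in> set ?rs) = False" using False by simp
    have 3: "enc (evalF t (Comp f gs) xs) = enc (evalF t f (map the ?rs))"
      by (simp only: evalF.simps Let_def F if_False)
    have 1: "(if 0 \<in> set ?vs then 0 else 1) * enc (evalF t f ?ys) = enc (evalF t f ?ys)"
      using \<open>0 \<notin> set ?vs\<close> by (simp only: if_False mult_1 simp_thms)
    have 2: "enc (evalF t f ?ys) = enc (evalF t f (map the ?rs))" by (simp only: ys)
    show ?thesis using trans[OF 1 trans[OF 2 3[symmetric]]] .
  qed
  show ?case unfolding comp.simps
  proof (rule evC[where ys="[(if 0 \<in> set ?vs then 0 else 1), enc (evalF t f ?ys)]"])
    show "eval MUL [(if 0 \<in> set ?vs then 0 else 1), enc (evalF t f ?ys)] (enc (evalF t (Comp f gs) xs))"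
      by (rule ev_MUL) (rule val[symmetric])
  qed (use A B in simp)
next
  case (Prim f g)
  show ?case
  proof (cases xs)
    case Nil then show ?thesis using Prim.prems by (auto intro: evZ)
  next
    case (Cons n ys)
    then obtain a where ar: "ar = Suc a" and ly: "length ys = a" using Prim.prems by auto
    define F where "F = (\<lambda>j s. (if s = 0 then 0 else 1) * enc (evalF t g (j # (s - 1) # ys)))"
    have it: "itr (enc (evalF t f ys)) F k = enc (primF (evalF t f ys) (\<lambda>m y. evalF t g (m # y # ys)) k)" for k
      by (induction k) (auto simp: F_def split: option.splits)
    let ?S = "Comp MUL [Comp SG [Proj 1],
          Comp (comp (Suc (Suc a)) g) (Proj 2 # Proj 0 # Comp PRED [Proj 1] # projs 3 a)]"
    have S: "eval ?S (j # s # t # ys) (F j s)" for j s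
    proof -
      have ev: "eval (comp (Suc (Suc a)) g) (t # j # (s - 1) # ys) (enc (evalF t g (j # (s - 1) # ys)))"
        by (rule Prim.IH(2)) (simp add: ly)
      have pr: "list_all2 (\<lambda>g y. eval g (j # s # t # ys) y) (projs 3 a) ys"
        using la2_projs[of "j # s # t # ys" 3 a] ly by simp
      have sg: "eval (Comp SG [Proj 1]) (j # s # t # ys) (if s = 0 then 0 else 1)"
        by (rule evC1[OF evP1 ev_SG[OF refl]])
      have pd: "eval (Comp PRED [Proj 1]) (j # s # t # ys) (s - 1)"
        by (rule evC1[OF evP1 ev_PRED[OF refl]])
      have args: "list_all2 (\<lambda>g y. eval g (j # s # t # ys) y)
          (Proj 2 # Proj 0 # Comp PRED [Proj 1] # projs 3 a) (t # j # (s - 1) # ys)"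
        using pr pd evP0 evP2 by simp
      show ?thesis unfolding F_def
        by (rule evC2[OF sg evC[OF args ev] ev_MUL[OF refl]])
    qed
    have P: "eval (Prim (comp a f) ?S) (n # t # ys) (itr (enc (evalF t f ys)) F n)"
    proof -
      have Bf: "eval (comp a f) (t # ys) (enc (evalF t f ys))" by (rule Prim.IH(1)) (simp add: ly)
      show ?thesis by (rule prim_eval[OF Bf S])
    qed
    have pr2: "list_all2 (\<lambda>g y. eval g (t # n # ys) y) (projs 2 a) ys"
      using la2_projs[of "t # n # ys" 2 a] ly by simp
    show ?thesis unfolding Cons ar comp.simps nat.case
    proof (rule evC[where ys="n # t # ys"])
      show "list_all2 (\<lambda>g y. eval g (t # n # ys) y) (Proj 1 # Proj 0 # projs 2 a) (n # t # ys)"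
        using pr2 by (auto intro: evP)
      show "eval (Prim (comp a f) ?S) (n # t # ys) (enc (evalF t (Prim f g) (n # ys)))"
        unfolding evalF.simps list.case it[symmetric] by (rule P)
    qed
  qed
next
  case (Mini f)
  let ?h = "\<lambda>m. evalF t f (m # xs)"
  let ?E = "Comp (comp (Suc ar) f) (Proj 2 # Proj 0 # projs 3 ar)"
  define F where "F = (\<lambda>j s. if s = 0 then (if enc (?h j) = 0 then 1 else if enc (?h j) - 1 = 0 then Suc (Suc j) else 0) else s)"
  have E: "eval ?E (j # s # t # xs) (enc (?h j))" for j s
  proof (rule evC[where ys="t # j # xs"])
    show "eval (comp (Suc ar) f) (t # j # xs) (enc (?h j))" by (rule Mini.IH) (simp add: Mini.prems)
    have "list_all2 (\<lambda>g y. eval g (j # s # t # xs) y) (projs 3 ar) xs"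
      using la2_projs[of "j # s # t # xs" 3 ar] Mini.prems by simp
    then show "list_all2 (\<lambda>g y. eval g (j # s # t # xs) y) (Proj 2 # Proj 0 # projs 3 ar) (t # j # xs)"
      by (auto intro: evP)
  qed
  let ?S = "Comp IFZ [Proj 1,
         Comp IFZ [?E, constr 1,
           Comp IFZ [Comp PRED [?E], Comp Succ [Comp Succ [Proj 0]], Zero]],
         Proj 1]"
  have S: "eval ?S (j # s # t # xs) (F j s)" for j s
    unfolding F_def
    by (rule evC la2C la2N ev_IFZ ev_PRED E ev_constr evS evZ evP refl | simp)+
  have it: "itr 0 F j = mst ?h j" for j
    by (induction j) (auto simp: F_def enc_0 split: option.splits nat.splits)
  have P: "eval (Prim Zero ?S) (t # t # xs) (mst ?h t)"
    using prim_eval[OF evZ[OF refl] S, of t] it by simp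
  have pr: "list_all2 (\<lambda>g y. eval g (t # xs) y) (projs 1 ar) xs"
    using la2_projs[of "t # xs" 1 ar] Mini.prems by simp
  have P2: "eval (Comp (Prim Zero ?S) (Proj 0 # Proj 0 # projs 1 ar)) (t # xs) (mst ?h t)"
  proof (rule evC[where ys="t # t # xs"])
    show "list_all2 (\<lambda>g y. eval g (t # xs) y) (Proj 0 # Proj 0 # projs 1 ar) (t # t # xs)"
      using pr by (auto intro: evP)
  qed (rule P)
  let ?m = "mst ?h t"
  have i: "eval (Comp IFZ [Comp PRED [Proj 0], Zero, Comp PRED [Proj 0]]) [?m]
      (if ?m - 1 = 0 then 0 else ?m - 1)"
    by (rule evC3[OF evC1[OF evP0 ev_PRED[OF refl]] evZ[OF refl] evC1[OF evP0 ev_PRED[OF refl]] ev_IFZ[OF refl]])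
  have o: "eval (Comp IFZ [Proj 0, Zero, Comp IFZ [Comp PRED [Proj 0], Zero, Comp PRED [Proj 0]]]) [?m]
      (if ?m = 0 then 0 else if ?m - 1 = 0 then 0 else ?m - 1)"
    by (rule evC3[OF evP0 evZ[OF refl] i ev_IFZ[OF refl]])
  have "(if ?m = 0 then 0 else if ?m - 1 = 0 then 0 else ?m - 1) = enc (evalF t (Mini f) xs)"
    by (auto simp: Let_def)
  then have o2: "eval (Comp IFZ [Proj 0, Zero, Comp IFZ [Comp PRED [Proj 0], Zero, Comp PRED [Proj 0]]]) [?m]
      (enc (evalF t (Mini f) xs))" using o by simp
  have "eval (Comp (Comp IFZ [Proj 0, Zero, Comp IFZ [Comp PRED [Proj 0], Zero, Comp PRED [Proj 0]]])
     [Comp (Prim Zero ?S) (Proj 0 # Proj 0 # projs 1 ar)]) (t # xs) (enc (evalF t (Mini f) xs))"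
    by (rule evC1[OF P2 o2])
  then show ?case by simp
qed


lemma sl_ev: assumes "sublinear_order f" "c > 0" shows "\<exists>N. \<forall>n\<ge>N. real (f n) \<le> c * real n"
proof -
  have "(\<lambda>n. real (f n)) \<in> o(\<lambda>n. real n)" using assms(1) by (simp add: sublinear_order_def)
  from landau_o.smallD[OF this assms(2)]
  have "eventually (\<lambda>n. norm (real (f n)) \<le> c * norm (real n)) at_top" .
  then show ?thesis by (simp add: eventually_at_top_linorder)
qed

lemma sl_mono: "sublinear_order f \<Longrightarrow> mono f" by (simp add: sublinear_order_def is_order_def)
lemma sl_unb: "sublinear_order f \<Longrightarrow> \<exists>n. m \<le> f n" by (simp add: sublinear_order_def is_order_def)

lemma sl_fin: assumes "sublinear_order f" shows "finite {n. n \<le> f n}"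
proof -
  obtain N where N: "\<forall>n\<ge>N. real (f n) \<le> (1/2) * real n" using sl_ev[OF assms, of "1/2"] by auto
  have "{n. n \<le> f n} \<subseteq> {..<max N 1}"
  proof
    fix n assume "n \<in> {n. n \<le> f n}"
    then have a: "n \<le> f n" by simp
    show "n \<in> {..<max N 1}"
    proof (rule ccontr)
      assume "n \<notin> {..<max N 1}"
      then have "n \<ge> N" "n \<ge> 1" by auto
      then have "real (f n) \<le> (1/2) * real n" using N by auto
      moreover have "real n \<le> real (f n)" using a by simp
      ultimately show False using \<open>n \<ge> 1\<close> by simp
    qed
  qed
  then show ?thesis by (rule finite_subset) simp
qed

context
  fixes f :: "nat \<Rightarrow> nat"
  assumes sl: "sublinear_order f"
begin

lemma pf_le: "pf f \<le> f (pf f)"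
proof -
  have "pf f \<in> {n. n \<le> f n}" unfolding pf_def by (rule Max_in[OF sl_fin[OF sl]]) auto
  then show ?thesis by simp
qed

lemma pf_max: "n \<le> f n \<Longrightarrow> n \<le> pf f"
  unfolding pf_def by (rule Max_ge[OF sl_fin[OF sl]]) simp

lemma pf_gt: assumes "pf f < n" shows "f n < n"
proof (rule ccontr)
  assume "\<not> f n < n"
  then have "n \<le> f n" by simp
  then have "n \<le> pf f" by (rule pf_max)
  with assms show False by simp
qed

lemma pf_fix: "f (pf f) = pf f"
proof -
  have "f (pf f) \<le> f (f (pf f))" using sl_mono[OF sl] pf_le by (simp add: monoD)
  then have "f (pf f) \<le> pf f" by (rule pf_max)
  then show ?thesis using pf_le by simp
qed

lemma pf_below: "n \<le> pf f \<Longrightarrow> f n \<le> pf f"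
  using sl_mono[OF sl] pf_fix by (metis monoD)

lemma pf_below_iter: "n \<le> pf f \<Longrightarrow> (f ^^ k) n \<le> pf f"
  by (induction k) (auto intro: pf_below)

lemma iter_ex: "\<exists>k. (f ^^ k) n \<le> pf f"
proof (induction n rule: less_induct)
  case (less n)
  show ?case
  proof (cases "n \<le> pf f")
    case True then show ?thesis by (intro exI[of _ 0]) simp
  next
    case False
    then have "f n < n" using pf_gt by simp
    then obtain k where "(f ^^ k) (f n) \<le> pf f" using less by blast
    then have "(f ^^ Suc k) n \<le> pf f" by (simp add: funpow_Suc_right del: funpow.simps)
    then show ?thesis by blast
  qed
qed

lemma star_le_iff: "star f n \<le> k \<longleftrightarrow> (f ^^ k) n \<le> pf f"
proof
  assume a: "star f n \<le> k"
  have s: "(f ^^ star f n) n \<le> pf f" unfolding star_def by (rule LeastI_ex[OF iter_ex])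
  have "(f ^^ k) n = (f ^^ (k - star f n)) ((f ^^ star f n) n)"
    using a by (metis funpow_add le_add_diff_inverse2 o_apply)
  then show "(f ^^ k) n \<le> pf f" using pf_below_iter[OF s] by simp
next
  assume "(f ^^ k) n \<le> pf f"
  then show "star f n \<le> k" unfolding star_def by (rule Least_le)
qed

lemma star_iter: "(f ^^ star f n) n \<le> pf f"
  using star_le_iff by blast

lemma star_f: "star f (f n) = star f n - 1"
proof (cases "n \<le> pf f")
  case True
  then have "star f n = 0" "star f (f n) = 0" using star_le_iff[of n 0] star_le_iff[of "f n" 0] pf_below by auto
  then show ?thesis by simp
next
  case False
  then have pos: "star f n \<noteq> 0" using star_le_iff[of n 0] by auto
  have "star f (f n) \<le> star f n - 1"
  proof -
    obtain k where k: "star f n = Suc k" using pos not0_implies_Suc by blast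
    then have "(f ^^ k) (f n) \<le> pf f" using star_iter[of n] by (simp add: funpow_Suc_right del: funpow.simps)
    then have "star f (f n) \<le> k" using star_le_iff by blast
    then show ?thesis using k by simp
  qed
  moreover have "star f n - 1 \<le> star f (f n)"
  proof -
    have "(f ^^ Suc (star f (f n))) n \<le> pf f"
      using star_iter[of "f n"] by (simp add: funpow_Suc_right del: funpow.simps)
    then have "star f n \<le> Suc (star f (f n))" using star_le_iff by blast
    then show ?thesis by simp
  qed
  ultimately show ?thesis by simp
qed

lemma star_iterate: "star f ((f ^^ i) n) = star f n - i"
  by (induction i) (auto simp: star_f)

lemma part4: "star f ((f ^^ i) n) \<le> star f n \<and> star f n \<le> star f ((f ^^ i) n) + i"
  using star_iterate by simp

lemma iter_mono: "n \<le> m \<Longrightarrow> (f ^^ k) n \<le> (f ^^ k) m"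
  by (induction k) (auto intro: monoD[OF sl_mono[OF sl]])

lemma star_mono: "mono (star f)"
proof (rule monoI)
  fix n m :: nat assume "n \<le> m"
  then have "(f ^^ star f m) n \<le> pf f" using iter_mono star_iter le_trans by blast
  then show "star f n \<le> star f m" using star_le_iff by blast
qed

lemma iter_big: "\<exists>n. pf f < (f ^^ j) n"
proof (induction j)
  case 0 then show ?case by (intro exI[of _ "Suc (pf f)"]) simp
next
  case (Suc j)
  then obtain n where n: "pf f < (f ^^ j) n" by blast
  obtain n' where "n \<le> f n'" using sl_unb[OF sl] by blast
  then have "(f ^^ j) n \<le> (f ^^ j) (f n')" by (rule iter_mono)
  then have "pf f < (f ^^ Suc j) n'" using n by (simp add: funpow_Suc_right del: funpow.simps)
  then show ?case by blast
qed

lemma star_unb: "\<exists>n. m \<le> star f n"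
proof -
  obtain n where "pf f < (f ^^ m) n" using iter_big by blast
  then have "\<not> star f n \<le> m" using star_le_iff by simp
  then show ?thesis by (intro exI[of _ n]) simp
qed

lemma pow_sq: "(s::nat)^2 \<le> 2 ^ (s + 1)"
proof (induction s rule: less_induct)
  case (less s)
  show ?case
  proof (cases "s \<le> 3")
    case True
    then have "s = 0 \<or> s = 1 \<or> s = 2 \<or> s = 3" by auto
    then show ?thesis by (auto simp: power2_eq_square)
  next
    case False
    then obtain r where s: "s = Suc r" and r: "r \<ge> 3" by (cases s) auto
    have "r^2 \<le> 2^(r+1)" using less s by simp
    moreover have "(Suc r)^2 \<le> 2 * r^2"
    proof -
      have h: "3 * r \<le> r * r" using r by (intro mult_le_mono1)
      have "Suc (r + r) \<le> r * r" using h r by linarith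
      then show ?thesis by (simp add: power2_eq_square)
    qed
    ultimately show ?thesis using s by simp
  qed
qed

lemma star_pow: "\<exists>K::nat. \<forall>n. 2 ^ star f n \<le> K * (n + 1)"
proof -
  obtain N0 where N0: "\<forall>n\<ge>N0. real (f n) \<le> (1/4) * real n" using sl_ev[OF sl, of "1/4"] by auto
  define N where "N = max N0 (pf f + 2)"
  define K :: nat where "K = 2 ^ star f N"
  have "2 ^ star f n \<le> K * (n + 1)" for n
  proof (induction n rule: less_induct)
    case (less n)
    show ?case
    proof (cases "n < N")
      case True
      then have "star f n \<le> star f N" using star_mono by (simp add: monoD)
      then have "2 ^ star f n \<le> K" unfolding K_def by (simp add: power_increasing)
      then show ?thesis by (simp add: trans_le_add1)
    next
      case False
      then have n: "N \<le> n" by simp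
      then have "pf f < n" "n \<ge> 2" "N0 \<le> n" unfolding N_def by auto
      then have fn: "f n < n" using pf_gt by blast
      have "real (f n) \<le> (1/4) * real n" using N0 \<open>N0 \<le> n\<close> by auto
      then have "4 * f n \<le> n" by linarith
      have sn: "star f n = Suc (star f (f n))"
        using star_f[of n] \<open>pf f < n\<close> star_le_iff[of n 0] by auto
      have "2 ^ star f n = 2 * 2 ^ star f (f n)" using sn by simp
      also have "\<dots> \<le> 2 * (K * (f n + 1))" using less[OF fn] by simp
      also have "\<dots> = K * (2 * f n + 2)" by simp
      also have "\<dots> \<le> K * (n + 1)" using \<open>4 * f n \<le> n\<close> \<open>n \<ge> 2\<close> by (intro mult_le_mono2) linarith
      finally show ?thesis .
    qed
  qed
  then show ?thesis by blast
qed

lemma star_small: "(\<lambda>n. real (star f n)) \<in> o(\<lambda>n. real n)"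
proof (rule landau_o.smallI)
  fix c :: real assume c: "c > 0"
  obtain K :: nat where K: "\<forall>n. 2 ^ star f n \<le> K * (n + 1)" using star_pow by blast
  define N where "N = nat \<lceil>4 * real K / c^2\<rceil> + 1"
  have "\<forall>n\<ge>N. norm (real (star f n)) \<le> c * norm (real n)"
  proof (intro allI impI)
    fix n assume n: "N \<le> n"
    then have n1: "n \<ge> 1" unfolding N_def by simp
    have "4 * real K / c^2 \<le> real n" using n unfolding N_def by linarith
    then have Kn: "4 * real K \<le> c^2 * real n" using c by (simp add: field_simps)
    let ?s = "star f n"
    have "?s^2 \<le> 2 * (K * (n + 1))"
      using pow_sq[of ?s] K[rule_format, of n] by simp
    then have "real (?s^2) \<le> real (2 * (K * (n + 1)))" by (simp only: of_nat_le_iff)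
    then have "real (?s^2) \<le> 2 * real K * (real n + 1)" by (simp add: algebra_simps)
    also have "\<dots> \<le> 4 * real K * real n"
    proof -
      have "real K * 1 \<le> real K * real n" using n1 by (intro mult_left_mono) auto
      then show ?thesis by (simp add: algebra_simps)
    qed
    also have "\<dots> \<le> c^2 * real n * real n" by (rule mult_right_mono[OF Kn]) simp
    finally have "(real ?s)^2 \<le> (c * real n)^2" by (simp add: power_mult_distrib power2_eq_square mult_ac)
    then have "real ?s \<le> c * real n" by (rule power2_le_imp_le) (use c in simp)
    then show "norm (real (star f n)) \<le> c * norm (real n)" by simp
  qed
  then show "eventually (\<lambda>n. norm (real (star f n)) \<le> c * norm (real n)) at_top"
    unfolding eventually_at_top_linorder by blast
qed

lemma part1: "sublinear_order (star f)"
  unfolding sublinear_order_def is_order_def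
  by (intro conjI allI star_mono star_unb star_small)

end

definition "IT2 c = Prim (Proj 0) (Comp c [Proj 1])"
definition "Q2 c p = Comp NSG [Comp LEQ [IT2 c, constr p]]"

lemma ev_IT2: assumes c: "\<forall>n. eval c [n] (f n)" shows "eval (IT2 c) [k, n] ((f ^^ k) n)"
proof -
  have "itr n (\<lambda>j s. f s) k = (f ^^ k) n" by (induction k) auto
  moreover have "eval (Prim (Proj 0) (Comp c [Proj 1])) [k, n] (itr n (\<lambda>j s. f s) k)"
    by (rule prim_eval[OF evP0]) (rule evC1[OF evP1 c[rule_format]])
  ultimately show ?thesis unfolding IT2_def by simp
qed

lemma ev_Q2: assumes c: "\<forall>n. eval c [n] (f n)"
  shows "eval (Q2 c p) [k, n] (if (f ^^ k) n \<le> p then 0 else 1)"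
  unfolding Q2_def
  by (rule evC1[OF evC2[OF ev_IT2[OF c] ev_constr[OF refl] ev_LEQ[OF refl]] ev_NSG]) simp

lemma part2: assumes sl: "sublinear_order f" and cf: "computable f" shows "computable (star f)"
proof -
  obtain c where c: "\<forall>n. eval c [n] (f n)" using cf unfolding computable_def by blast
  have "eval (Mini (Q2 c (pf f))) [n] (star f n)" for n
  proof (rule eval_Mini)
    show "eval (Q2 c (pf f)) [star f n, n] 0"
      using ev_Q2[OF c, of "pf f" "star f n" n] star_iter[OF sl, of n] by simp
    show "\<forall>m<star f n. \<exists>y. eval (Q2 c (pf f)) [m, n] (Suc y)"
    proof (intro allI impI)
      fix m assume "m < star f n"
      then have "\<not> (f ^^ m) n \<le> pf f" using star_le_iff[OF sl, of n m] by simp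
      then show "\<exists>y. eval (Q2 c (pf f)) [m, n] (Suc y)"
        using ev_Q2[OF c, of "pf f" m n] by auto
    qed
  qed
  then show ?thesis unfolding computable_def by blast
qed

definition "H c t a b \<longleftrightarrow> evalF t c [a, b] \<noteq> None"

definition "fbF c t a = itr 0 (\<lambda>j s. if s = 0 then (if H c t a j then Suc j else 0) else s) t"

lemma fb_char: "itr 0 (\<lambda>j s. if s = 0 then (if H c t a j then Suc j else 0) else s) m
   = (if \<exists>b<m. H c t a b then Suc (LEAST b. H c t a b) else 0)"
proof (induction m)
  case 0 then show ?case by simp
next
  case (Suc m)
  show ?case
  proof (cases "\<exists>b<m. H c t a b")
    case True
    then have "\<exists>b<Suc m. H c t a b" by (meson less_SucI)
    then show ?thesis using Suc True by simp
  next
    case False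
    then have l: "H c t a m \<Longrightarrow> (LEAST b. H c t a b) = m"
      by (intro Least_equality) (auto simp: not_less[symmetric])
    have "(\<exists>b<Suc m. H c t a b) = H c t a m" using False less_Suc_eq by auto
    then show ?thesis using Suc False l by simp
  qed
qed

definition "HB c = Comp SG [Comp (comp 2 c) [Proj 2, Proj 3, Proj 0]]"
definition "FBP c = Prim Zero (Comp IFZ [Proj 1, Comp IFZ [HB c, Zero, Comp Succ [Proj 0]], Proj 1])"
definition "FB c = Comp (FBP c) [Proj 0, Proj 0, Proj 1]"

lemma evP3: "eval (Proj 3) (w # z # y # x # L) x" using eval_Proj[of 3 "w # z # y # x # L"] by simp

lemma ev_HB: "eval (HB c) [j, s, t, a] (if H c t a j then 1 else 0)"
proof -
  have "eval (comp 2 c) [t, a, j] (enc (evalF t c [a, j]))" using comp_correct[of "[a, j]" 2 c t] by simp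
  then have "eval (Comp (comp 2 c) [Proj 2, Proj 3, Proj 0]) [j, s, t, a] (enc (evalF t c [a, j]))"
    by (rule evC3[OF evP2 evP3 evP0])
  then show ?thesis unfolding HB_def
    by (rule evC1) (rule ev_SG, simp add: H_def enc_0)
qed

lemma ev_FB: "eval (FB c) [t, a] (fbF c t a)"
proof -
  define F where "F = (\<lambda>j s. if s = 0 then (if H c t a j then Suc j else 0) else s)"
  have S: "eval (Comp IFZ [Proj 1, Comp IFZ [HB c, Zero, Comp Succ [Proj 0]], Proj 1]) [j, s, t, a] (F j s)" for j s
  proof -
    have "eval (Comp IFZ [HB c, Zero, Comp Succ [Proj 0]]) [j, s, t, a] (if H c t a j then Suc j else 0)"
      by (rule evC3[OF ev_HB evZ[OF refl] evC1[OF evP0 evS[OF refl]] ev_IFZ]) simp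
    then show ?thesis unfolding F_def
      by (rule evC3[OF evP1 _ evP1 ev_IFZ[OF refl]])
  qed
  have "eval (FBP c) [t, t, a] (itr 0 F t)" unfolding FBP_def
    by (rule prim_eval[OF evZ[OF refl]]) (rule S)
  then show ?thesis unfolding FB_def fbF_def F_def
    by (rule evC3[OF evP0 evP0 evP1])
qed

definition "Gf c t n k = itr (Suc n) (\<lambda>i s. if s = 0 then 0 else fbF c t (s - 1)) k"

definition "IT3 c = Comp (Prim (Comp Succ [Proj 1]) (Comp IFZ [Proj 1, Zero, Comp (FB c) [Proj 2, Comp PRED [Proj 1]]]))
   [Proj 2, Proj 0, Proj 1]"

lemma ev_IT3: "eval (IT3 c) [t, n, k] (Gf c t n k)"
proof -
  define F :: "nat \<Rightarrow> nat \<Rightarrow> nat" where "F = (\<lambda>i s. if s = 0 then 0 else fbF c t (s - 1))"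
  have S: "eval (Comp IFZ [Proj 1, Zero, Comp (FB c) [Proj 2, Comp PRED [Proj 1]]]) [i, s, t, n] (F i s)" for i s
  proof -
    have "eval (Comp (FB c) [Proj 2, Comp PRED [Proj 1]]) [i, s, t, n] (fbF c t (s - 1))"
      by (rule evC2[OF evP2 evC1[OF evP1 ev_PRED[OF refl]] ev_FB])
    then show ?thesis unfolding F_def
      by (rule evC3[OF evP1 evZ[OF refl] _ ev_IFZ]) simp
  qed
  have "eval (Prim (Comp Succ [Proj 1]) (Comp IFZ [Proj 1, Zero, Comp (FB c) [Proj 2, Comp PRED [Proj 1]]]))
      [k, t, n] (itr (Suc n) F k)"
    by (rule prim_eval[OF evC1[OF evP1 evS[OF refl]]]) (rule S)
  then show ?thesis unfolding IT3_def Gf_def F_def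
    by (rule evC3[OF evP2 evP0 evP1])
qed

definition "QQ c p = Comp IFZ [IT3 c, constr 1, Comp NSG [Comp LEQ [IT3 c, constr (Suc p)]]]"

lemma ev_QQ: "eval (QQ c p) [t, n, k] (if Gf c t n k \<noteq> 0 \<and> Gf c t n k \<le> Suc p then 0 else 1)"
  unfolding QQ_def
  by (rule evC3[OF ev_IT3 ev_constr[OF refl] evC1[OF evC2[OF ev_IT3 ev_constr[OF refl] ev_LEQ[OF refl]] ev_NSG[OF refl]] ev_IFZ]) simp

inductive_cases evMiniE: "eval (Mini f) xs y"

lemma Mini_dom: assumes "\<And>t. eval Q [t, n, k] (if P t then 0 else 1)"
  shows "(\<exists>y. eval (Mini Q) [n, k] y) \<longleftrightarrow> (\<exists>t. P t)"
proof
  assume "\<exists>y. eval (Mini Q) [n, k] y"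
  then obtain y where "eval (Mini Q) [n, k] y" by blast
  then have "eval Q [y, n, k] 0" by (rule evMiniE) simp
  then have "(if P y then 0 else 1) = (0::nat)" using eval_det assms by blast
  then show "\<exists>t. P t" by (auto split: if_splits)
next
  assume "\<exists>t. P t"
  then have P: "P (LEAST t. P t)" by (rule LeastI_ex)
  have "eval (Mini Q) [n, k] (LEAST t. P t)"
  proof (rule eval_Mini)
    show "eval Q [LEAST t. P t, n, k] 0" using assms[of "LEAST t. P t"] P by simp
    show "\<forall>m<LEAST t. P t. \<exists>y. eval Q [m, n, k] (Suc y)"
    proof (intro allI impI)
      fix m assume "m < (LEAST t. P t)"
      then have "\<not> P m" by (rule not_less_Least)
      then show "\<exists>y. eval Q [m, n, k] (Suc y)" using assms[of m] by auto
    qed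
  qed
  then show "\<exists>y. eval (Mini Q) [n, k] y" by blast
qed

context
  fixes f :: "nat \<Rightarrow> nat" and c :: recf
  assumes sl: "sublinear_order f"
    and cf: "\<forall>n k. f n \<le> k \<longleftrightarrow> (\<exists>y. eval c [n, k] y)"
begin

lemma H_le: "H c t a b \<Longrightarrow> f a \<le> b"
proof -
  assume "H c t a b"
  then obtain y where "evalF t c [a, b] = Some y" unfolding H_def by blast
  then have "eval c [a, b] y" by (rule evalF_sound)
  then show "f a \<le> b" using cf by blast
qed

lemma G_sound: "Gf c t n k \<noteq> 0 \<Longrightarrow> (f ^^ k) n \<le> Gf c t n k - 1"
proof (induction k)
  case 0 then show ?case by (simp add: Gf_def)
next
  case (Suc k)
  let ?a = "Gf c t n k - 1"
  have G: "Gf c t n (Suc k) = (if Gf c t n k = 0 then 0 else fbF c t ?a)" by (simp add: Gf_def)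
  have nz: "Gf c t n k \<noteq> 0" using Suc.prems G by (auto split: if_splits)
  then have fb: "fbF c t ?a \<noteq> 0" using Suc.prems G by simp
  then have ex: "\<exists>b<t. H c t ?a b" and fbv: "fbF c t ?a = Suc (LEAST b. H c t ?a b)"
    unfolding fbF_def fb_char by (auto split: if_splits)
  have "H c t ?a (LEAST b. H c t ?a b)" using ex by (meson LeastI)
  then have le: "f ?a \<le> (LEAST b. H c t ?a b)" by (rule H_le)
  have "f ((f ^^ k) n) \<le> f ?a" using Suc.IH[OF nz] sl_mono[OF sl] by (simp add: monoD)
  then show ?case using le fbv G nz by simp
qed

lemma G_complete: assumes "(f ^^ k) n \<le> pf f" shows "\<exists>t. Gf c t n k \<noteq> 0 \<and> Gf c t n k \<le> Suc (pf f)"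
proof -
  define B where "B = max n (pf f)"
  have step: "x \<le> B \<Longrightarrow> f x \<le> B" for x
  proof (cases "x \<le> pf f")
    case True then show ?thesis using pf_below[OF sl] unfolding B_def by fastforce
  next
    case False then show "x \<le> B \<Longrightarrow> f x \<le> B" using pf_gt[OF sl, of x] by simp
  qed
  have bnd: "(f ^^ i) n \<le> B" for i
  proof (induction i)
    case 0 then show ?case by (simp add: B_def)
  next
    case (Suc i) then show ?case using step by simp
  qed
  have "\<forall>a<Suc B. \<exists>T. \<forall>t\<ge>T. \<exists>y. evalF t c [a, f a] = Some y"
  proof (intro allI impI)
    fix a
    obtain y where "eval c [a, f a] y" using cf by blast
    from evalF_complete[OF this] show "\<exists>T. \<forall>t\<ge>T. \<exists>y. evalF t c [a, f a] = Some y" by blast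
  qed
  then have "\<exists>T. \<forall>a<Suc B. \<forall>t\<ge>T. \<exists>y. evalF t c [a, f a] = Some y" by (rule bounded_choice)
  then obtain T where T: "\<forall>a<Suc B. \<forall>t\<ge>T. \<exists>y. evalF t c [a, f a] = Some y" by (rule exE)
  define t where "t = max T (Suc (f B))"
  have fbv: "fbF c t a = Suc (f a)" if a: "a \<le> B" for a
  proof -
    have Ha: "H c t a (f a)" using T a unfolding H_def t_def by fastforce
    have "f a \<le> f B" using a sl_mono[OF sl] by (simp add: monoD)
    then have lt: "f a < t" unfolding t_def by simp
    have L: "(LEAST b. H c t a b) = f a"
      by (rule Least_equality[where P="\<lambda>b. H c t a b", OF Ha]) (rule H_le)
    have "\<exists>b<t. H c t a b" using Ha lt by blast
    then show ?thesis unfolding fbF_def fb_char using L by simp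
  qed
  have Gv: "Gf c t n i = Suc ((f ^^ i) n)" for i
  proof (induction i)
    case 0 then show ?case by (simp add: Gf_def)
  next
    case (Suc i)
    have "Gf c t n (Suc i) = (if Gf c t n i = 0 then 0 else fbF c t (Gf c t n i - 1))" by (simp add: Gf_def)
    then show ?case using Suc fbv[OF bnd[of i]] by simp
  qed
  show ?thesis using Gv[of k] assms by (intro exI[of _ t]) simp
qed

lemma part3_aux: "upper_semicomputable (star f)"
proof -
  have "star f n \<le> k \<longleftrightarrow> (\<exists>y. eval (Mini (QQ c (pf f))) [n, k] y)" for n k
  proof -
    have "(\<exists>y. eval (Mini (QQ c (pf f))) [n, k] y) \<longleftrightarrow> (\<exists>t. Gf c t n k \<noteq> 0 \<and> Gf c t n k \<le> Suc (pf f))"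
      by (rule Mini_dom) (rule ev_QQ)
    also have "\<dots> \<longleftrightarrow> (f ^^ k) n \<le> pf f"
    proof
      assume "\<exists>t. Gf c t n k \<noteq> 0 \<and> Gf c t n k \<le> Suc (pf f)"
      then obtain t where "Gf c t n k \<noteq> 0" "Gf c t n k \<le> Suc (pf f)" by blast
      then show "(f ^^ k) n \<le> pf f" using G_sound[of t n k] by simp
    qed (rule G_complete)
    also have "\<dots> \<longleftrightarrow> star f n \<le> k" using star_le_iff[OF sl] by simp
    finally show ?thesis by simp
  qed
  then show ?thesis unfolding upper_semicomputable_def by blast
qed

end

lemma part3: "sublinear_order f \<Longrightarrow> upper_semicomputable f \<Longrightarrow> upper_semicomputable (star f)"
  unfolding upper_semicomputable_def[of f] using part3_aux by blast

theorem lemma3: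
  fixes f :: "nat \<Rightarrow> nat"
  assumes "sublinear_order f"
  shows "sublinear_order (star f)
     \<and> (computable f \<longrightarrow> computable (star f))
     \<and> (upper_semicomputable f \<longrightarrow> upper_semicomputable (star f))
     \<and> (\<forall>n i. star f ((f ^^ i) n) \<le> star f n \<and> star f n \<le> star f ((f ^^ i) n) + i)"
  using part1[OF assms] part2[OF assms] part3[OF assms] part4[OF assms] by blast


end
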